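(* The validation error at $\tilde C$ satisfies $$E_v(w^*_{\tilde C})\ge \frac1{n'}\Big(\#\{i:y'_i=+1,\ \hat w^\top x'_i+\delta(x'_i)<0\}+\#\{i:y'_i=-1,\ \hat w^\top x'_i-\gamma(x'_i)>0\}\Big)$$ and $$E_v(w^*_{\tilde C})\le 1-\frac1{n'}\Big(\#\{i:y'_i=+1,\ \hat w^\top x'_i-\gamma(x'_i)\ge0\}+\#\{i:y'_i=-1,\ \hat w^\top x'_i+\delta(x'_i)\le 0\}\Big).$$
   Context: Let $\{(x_i,y_i)\}_{i=1}^n\subset\mathbb R^d\times\{-1,1\}$ be a training set and $\{(x'_i,y'_i)\}_{i=1}^{n'}\subset\mathbb R^d\times\{-1,1\}$ a validation set. Let $\ell:\{-1,1\}\times\mathbb R\to\mathbb R$ be convex in its second argument, and set $\ell_i(w):=\ell(y_i,w^\top x_i)$. For $C>0$ let $w^*_C$ be the (unique) minimizer over $w\in\mathbb R^d$ of $P_C(w)=\frac12\|w\|^2+C\sum_{i=1}^n\ell_i(w)$. The validation error of $w\in\mathbb R^d$ is $E_v(w):=\frac1{n'}\#\{i\in\{1,\dots,n'\}: y'_iw^\top x'_i<0\}$ (a score exactly $0$ counts as correct). Fix $\tilde C>0$ and an arbitrary $\hat w\in\mathbb R^d$; for each $i$ let $\xi_i\in\partial\ell_i(\hat w)$, and set $g:=\hat w+\tilde C\sum_{i=1}^n\xi_i$. For $x\in\mathbb R^d$ define $\gamma(x):=\frac12(\|g\|\|x\|+g^\top x)$, $\delta(x):=\frac12(\|g\|\|x\|-g^\top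 x)$. *)

theory Defs
  imports "HOL-Analysis.Analysis"
begin

definition subdiff :: "('a::real_inner \<Rightarrow> real) \<Rightarrow> 'a \<Rightarrow> 'a set" where
  "subdiff f w = {\<xi>. \<forall>v. f v \<ge> f w + \<xi> \<bullet> (v - w)}"

definition primal_obj ::
  "(real \<Rightarrow> real \<Rightarrow> real) \<Rightarrow> nat \<Rightarrow> (nat \<Rightarrow> 'a::real_inner) \<Rightarrow> (nat \<Rightarrow> real) \<Rightarrow> real \<Rightarrow> 'a \<Rightarrow> real" where
  "primal_obj loss n x y C w = (1/2) * (norm w)^2 + C * (\<Sum>i=1..n. loss (y i) (w \<bullet> x i))"

text \<open>Validation error E_v(w) (a score exactly 0 counts as correct).\<close>
definition val_err :: "nat \<Rightarrow> (nat \<Rightarrow> 'a::real_inner) \<Rightarrow> (nat \<Rightarrow> real) \<Rightarrow> 'a \<Rightarrow> real" where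
  "val_err n' x' y' w = real (card {i\<in>{1..n'}. y' i * (w \<bullet> x' i) < 0}) / real n'"

definition gam :: "'a::real_inner \<Rightarrow> 'a \<Rightarrow> real" where
  "gam g x = (1/2) * (norm g * norm x + g \<bullet> x)"

definition del :: "'a::real_inner \<Rightarrow> 'a \<Rightarrow> real" where
  "del g x = (1/2) * (norm g * norm x - g \<bullet> x)"

end

theory Submission
  imports Defs
begin

lemma ball_bound:
  fixes g d x :: "'a::real_inner"
  assumes "g \<bullet> d + (norm d)^2 \<le> 0"
  shows "- gam g x \<le> d \<bullet> x \<and> d \<bullet> x \<le> del g x"
proof -
  define r where "r = d + (1/2) *\<^sub>R g"
  have "(norm r)^2 = (norm d)^2 + g \<bullet> d + (norm g)^2/4"
    unfolding r_def power2_norm_eq_inner by (simp add: algebra_simps inner_commute)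
  also have "\<dots> \<le> ((1/2) * norm g)^2" using assms by (simp add: power2_eq_square)
  finally have "norm r \<le> (1/2) * norm g"
    by (rule power2_le_imp_le) simp
  hence "\<bar>r \<bullet> x\<bar> \<le> (1/2) * norm g * norm x"
    by (meson Cauchy_Schwarz_ineq2 mult_right_mono norm_ge_zero order_trans)
  moreover have "d \<bullet> x = r \<bullet> x - (1/2) * (g \<bullet> x)" unfolding r_def by (simp add: algebra_simps)
  ultimately have "r \<bullet> x \<le> (norm g * norm x)/2" "- (r \<bullet> x) \<le> (norm g * norm x)/2"
      "d \<bullet> x = r \<bullet> x - (g \<bullet> x)/2" by auto
  thus ?thesis unfolding gam_def del_def by (simp add: right_diff_distrib distrib_left)
qed

theorem corollary2:
  fixes x :: "nat \<Rightarrow> 'a::euclidean_space" and y :: "nat \<Rightarrow> real" and n :: nat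
    and x' :: "nat \<Rightarrow> 'a" and y' :: "nat \<Rightarrow> real" and n' :: nat
    and loss :: "real \<Rightarrow> real \<Rightarrow> real"
    and Ct :: real and what wstar :: 'a and \<xi> :: "nat \<Rightarrow> 'a"
  assumes y_lab: "\<forall>i\<in>{1..n}. y i \<in> {-1, 1}"
    and y'_lab: "\<forall>i\<in>{1..n'}. y' i \<in> {-1, 1}"
    and loss_convex: "\<forall>t\<in>{-1, 1}. convex_on UNIV (loss t)"
    and Ct_pos: "Ct > 0"
    and wstar_min: "\<forall>w. primal_obj loss n x y Ct wstar \<le> primal_obj loss n x y Ct w"
    and xi_sub: "\<forall>i\<in>{1..n}. \<xi> i \<in> subdiff (\<lambda>w. loss (y i) (w \<bullet> x i)) what"
  defines "g \<equiv> what + Ct *\<^sub>R (\<Sum>i=1..n. \<xi> i)"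
  shows "(val_err n' x' y' wstar \<ge>
           (real (card {i\<in>{1..n'}. y' i = 1 \<and> what \<bullet> x' i + del g (x' i) < 0})
          + real (card {i\<in>{1..n'}. y' i = -1 \<and> what \<bullet> x' i - gam g (x' i) > 0})) / real n')
       \<and> (val_err n' x' y' wstar \<le> 1 -
           (real (card {i\<in>{1..n'}. y' i = 1 \<and> what \<bullet> x' i - gam g (x' i) \<ge> 0})
          + real (card {i\<in>{1..n'}. y' i = -1 \<and> what \<bullet> x' i + del g (x' i) \<le> 0})) / real n')"
proof -
  define L where "L w = (\<Sum>i=1..n. loss (y i) (w \<bullet> x i))" for w
  have P: "primal_obj loss n x y Ct w = (1/2) * (norm w)^2 + Ct * L w" for w
    unfolding primal_obj_def L_def by simp
  have Lconv: "L ((1-t) *\<^sub>R a + t *\<^sub>R b) \<le> (1-t) * L a + t * L b"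
    if "0 \<le> t" "t \<le> 1" for t a b
  proof -
    have "loss (y i) (((1-t) *\<^sub>R a + t *\<^sub>R b) \<bullet> x i) \<le> (1-t) * loss (y i) (a \<bullet> x i) + t * loss (y i) (b \<bullet> x i)"
      if "i \<in> {1..n}" for i
    proof -
      have c: "convex_on UNIV (loss (y i))" using y_lab loss_convex that by blast
      have "((1-t) *\<^sub>R a + t *\<^sub>R b) \<bullet> x i = (1-t) * (a \<bullet> x i) + t * (b \<bullet> x i)"
        by (simp add: inner_add_left)
      thus ?thesis using convex_onD[OF c, of t "a \<bullet> x i" "b \<bullet> x i"] \<open>0 \<le> t\<close> \<open>t \<le> 1\<close> by simp
    qed
    hence "L ((1-t) *\<^sub>R a + t *\<^sub>R b) \<le> (\<Sum>i=1..n. (1-t) * loss (y i) (a \<bullet> x i) + t * loss (y i) (b \<bullet> x i))"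
      unfolding L_def by (rule sum_mono)
    thus ?thesis unfolding L_def by (simp add: sum.distrib sum_distrib_left)
  qed
  define e where "e = what - wstar"
  define D where "D = L what - L wstar"
  have step2: "0 \<le> wstar \<bullet> e + t/2 * (norm e)^2 + Ct * D" if "0 < t" "t \<le> 1" for t
  proof -
    have eq: "wstar + t *\<^sub>R e = (1-t) *\<^sub>R wstar + t *\<^sub>R what" unfolding e_def by (simp add: algebra_simps)
    have "(1/2) * (norm wstar)^2 + Ct * L wstar \<le> (1/2) * (norm (wstar + t *\<^sub>R e))^2 + Ct * L (wstar + t *\<^sub>R e)"
      using wstar_min P by metis
    also have "\<dots> \<le> (1/2) * (norm (wstar + t *\<^sub>R e))^2 + Ct * ((1-t) * L wstar + t * L what)"
      using Lconv[of t wstar what] that Ct_pos eq by (simp add: mult_left_mono)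
    also have "(norm (wstar + t *\<^sub>R e))^2 = (norm wstar)^2 + 2 * t * (wstar \<bullet> e) + t^2 * (norm e)^2"
      unfolding power2_norm_eq_inner by (simp add: algebra_simps inner_commute power2_eq_square)
    finally have "0 \<le> t * (wstar \<bullet> e + t/2 * (norm e)^2 + Ct * D)"
      unfolding D_def by (simp add: algebra_simps power2_eq_square)
    thus ?thesis using that by (simp add: zero_le_mult_iff)
  qed
  have step3: "0 \<le> wstar \<bullet> e + Ct * D"
  proof (rule ccontr)
    assume na: "\<not> ?thesis"
    define a where "a = wstar \<bullet> e + Ct * D"
    have a: "a < 0" using na unfolding a_def by simp
    define t where "t = min 1 (-a / ((norm e)^2 + 1))"
    have "0 < (norm e)^2 + 1" by (simp add: add_nonneg_pos)
    have t0: "0 < t" "t \<le> 1" unfolding t_def using a divide_neg_pos[OF a, of "(norm e)^2 + 1"] \<open>0 < (norm e)^2 + 1\<close> by auto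
    have "t * (norm e)^2 \<le> (-a / ((norm e)^2 + 1)) * (norm e)^2"
      by (rule mult_right_mono) (auto simp: t_def)
    also have "\<dots> \<le> -a" using a
      by (simp add: field_simps add_pos_nonneg mult_left_mono)
    finally have "t/2 * (norm e)^2 < -a" using a by simp
    thus False using step2[OF t0] a_def by simp
  qed
  have step4: "L wstar \<ge> L what + (\<Sum>i=1..n. \<xi> i) \<bullet> (wstar - what)"
  proof -
    have "loss (y i) (what \<bullet> x i) + \<xi> i \<bullet> (wstar - what) \<le> loss (y i) (wstar \<bullet> x i)" if "i \<in> {1..n}" for i
      using xi_sub that unfolding subdiff_def by blast
    hence "(\<Sum>i=1..n. loss (y i) (what \<bullet> x i) + \<xi> i \<bullet> (wstar - what)) \<le> L wstar"
      unfolding L_def by (rule sum_mono)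
    thus ?thesis unfolding L_def by (simp add: sum.distrib inner_sum_left)
  qed
  define d where "d = wstar - what"
  have "Ct * ((\<Sum>i=1..n. \<xi> i) \<bullet> d) \<le> Ct * (- D)"
    using step4 Ct_pos unfolding D_def d_def by (intro mult_left_mono) auto
  hence "(Ct *\<^sub>R (\<Sum>i=1..n. \<xi> i)) \<bullet> d + wstar \<bullet> d \<le> 0"
    using step3 unfolding e_def d_def by (simp add: inner_diff_right algebra_simps)
  moreover have "wstar = what + d" unfolding d_def by simp
  ultimately have "g \<bullet> d + (norm d)^2 \<le> 0"
    unfolding g_def power2_norm_eq_inner by (simp add: inner_add_left algebra_simps)
  note B = ball_bound[OF this]
  have sc: "wstar \<bullet> z = what \<bullet> z + d \<bullet> z" for z unfolding d_def by (simp add: inner_diff_left)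
  define Err where "Err = {i\<in>{1..n'}. y' i * (wstar \<bullet> x' i) < 0}"
  define A1 where "A1 = {i\<in>{1..n'}. y' i = 1 \<and> what \<bullet> x' i + del g (x' i) < 0}"
  define A2 where "A2 = {i\<in>{1..n'}. y' i = -1 \<and> what \<bullet> x' i - gam g (x' i) > 0}"
  define C1 where "C1 = {i\<in>{1..n'}. y' i = 1 \<and> what \<bullet> x' i - gam g (x' i) \<ge> 0}"
  define C2 where "C2 = {i\<in>{1..n'}. y' i = -1 \<and> what \<bullet> x' i + del g (x' i) \<le> 0}"
  have "A1 \<union> A2 \<subseteq> Err"
  proof
    fix i assume "i \<in> A1 \<union> A2"
    have b: "- gam g (x' i) \<le> d \<bullet> x' i" "d \<bullet> x' i \<le> del g (x' i)" using B[of "x' i"] by auto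
    have s: "wstar \<bullet> x' i = what \<bullet> x' i + d \<bullet> x' i" by (rule sc)
    show "i \<in> Err"
    proof (cases "i \<in> A1")
      case True
      hence "i \<in> {1..n'}" "y' i = 1" "what \<bullet> x' i + del g (x' i) < 0" unfolding A1_def by auto
      thus ?thesis using b s unfolding Err_def by simp
    next
      case False
      hence "i \<in> A2" using \<open>i \<in> A1 \<union> A2\<close> by blast
      hence "i \<in> {1..n'}" "y' i = -1" "what \<bullet> x' i - gam g (x' i) > 0" unfolding A2_def by auto
      thus ?thesis using b s unfolding Err_def by simp
    qed
  qed
  hence "card (A1 \<union> A2) \<le> card Err" by (intro card_mono) (auto simp: Err_def)
  moreover have "card (A1 \<union> A2) = card A1 + card A2"
    by (rule card_Un_disjoint) (auto simp: A1_def A2_def)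
  ultimately have lo: "real (card A1) + real (card A2) \<le> real (card Err)" by simp
  have "Err \<inter> (C1 \<union> C2) = {}"
  proof (rule ccontr)
    assume "Err \<inter> (C1 \<union> C2) \<noteq> {}"
    then obtain i where i: "i \<in> Err" "i \<in> C1 \<union> C2" by blast
    have b: "- gam g (x' i) \<le> d \<bullet> x' i" "d \<bullet> x' i \<le> del g (x' i)" using B[of "x' i"] by auto
    have s: "wstar \<bullet> x' i = what \<bullet> x' i + d \<bullet> x' i" by (rule sc)
    have e: "y' i * (wstar \<bullet> x' i) < 0" using i(1) unfolding Err_def by simp
    show False
    proof (cases "i \<in> C1")
      case True
      hence "y' i = 1" "what \<bullet> x' i - gam g (x' i) \<ge> 0" unfolding C1_def by auto
      thus False using b s e by simp
    next
      case False
      hence "i \<in> C2" using i(2) by blast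
      hence "y' i = -1" "what \<bullet> x' i + del g (x' i) \<le> 0" unfolding C2_def by auto
      thus False using b s e by simp
    qed
  qed
  moreover have "Err \<union> (C1 \<union> C2) \<subseteq> {1..n'}" unfolding Err_def C1_def C2_def by auto
  ultimately have "card Err + card (C1 \<union> C2) \<le> n'"
  proof -
    assume dj: "Err \<inter> (C1 \<union> C2) = {}" and sb: "Err \<union> (C1 \<union> C2) \<subseteq> {1..n'}"
    have f1: "finite Err" "finite (C1 \<union> C2)" using sb finite_subset by auto
    have "card (Err \<union> (C1 \<union> C2)) = card Err + card (C1 \<union> C2)"
      using card_Un_disjoint[OF f1 dj] .
    moreover have "card (Err \<union> (C1 \<union> C2)) \<le> card {1..n'}"
      using sb by (intro card_mono) auto
    ultimately show ?thesis by simp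
  qed
  moreover have "card (C1 \<union> C2) = card C1 + card C2"
    by (rule card_Un_disjoint) (auto simp: C1_def C2_def)
  ultimately have hi: "real (card Err) \<le> real n' - (real (card C1) + real (card C2))" by simp
  have ve: "val_err n' x' y' wstar = real (card Err) / real n'" unfolding val_err_def Err_def by simp
  show ?thesis
  proof (cases "n' = 0")
    case True
    thus ?thesis unfolding ve by simp
  next
    case False
    hence np: "real n' > 0" by simp
    show ?thesis unfolding ve A1_def[symmetric] A2_def[symmetric] C1_def[symmetric] C2_def[symmetric]
    proof
      show "(real (card A1) + real (card A2)) / real n' \<le> real (card Err) / real n'"
        using lo np by (simp add: divide_right_mono)
      have "real (card Err) / real n' \<le> (real n' - (real (card C1) + real (card C2))) / real n'"
        using hi np by (simp add: divide_right_mono)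
      also have "\<dots> = 1 - (real (card C1) + real (card C2)) / real n'"
        using np by (simp add: diff_divide_distrib)
      finally show "real (card Err) / real n' \<le> 1 - (real (card C1) + real (card C2)) / real n'" .
    qed
  qed
qed

end
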